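(* Consider an $(N,z)$-ensemble of one-dimensional random spring networks on the circle (defined in the context), with $N\ge 3$. For every $\bar\ell\in(-1/2,1/2)$, $$\mathbb E(\Delta l\mid \bar l=\bar\ell)=-\frac{2\bar\ell}{z}\Big(1-\frac1N\Big).$$ Moreover, for each fixed graph in the ensemble (i.e. conditioning on the matrix $\mathbf S$), $\mathbb E[\Delta l\mid \bar l=\bar\ell,\mathbf S]=\frac{2\bar\ell}{Nz}\operatorname{tr}\mathbf S$.
   Context: Let the circle be $\mathbb R/\mathbb Z$ (circumference 1). Fix an integer $N\ge3$ and a number $z$ with $2\le z\le N-1$ and $M:=Nz/2$ an integer. An $(N,z)$-network is generated as follows: (i) node positions $x_1,\dots,x_N$ are i.i.d. uniform on $\mathbb R/\mathbb Z$; (ii) for $k=1,\dots,N$ node $k$ is joined to node $k+1$ by a spring (indices mod $N$, so node $N$ is joined to node $1$); (iii) further springs are added between randomly chosen node pairs (by a random procedure independent of the positions), each unordered pair being joined by at most one spring, until there are $M$ springs. The ensemble of all such networks is the $(N,z)$-ensemble. A spring joining nodes $a<b$ is oriented from $a$ to $b$, and its initial signed length $\bar l_e\in[-1/2,1/2)$ is the representative of $x_b-x_a$ modulo $1$ in $[-1/2,1/2)$ (the signed length of the shorter arc, positive if counterclockwise); each $\bar l_e$ is uniform on $[-1/2,1/2)$. Let $G$ be the resulting directed graph, $\mathbf C\in\mathbb Z^{m\times M}$, $m=M-N+1$, a signed cycle matrix of $G$ (choose a spanning tree; each non-tree edge closes a fundamental cycle, oriented arbitrarily; $C_{ji}=\pm1$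 if edge $i$ is on cycle $j$ with agreeing/opposite orientation, $0$ otherwise). The vector of winding numbers is $\mathbf g=\mathbf C\bar{\boldsymbol l}\in\mathbb Z^m$. The relaxed lengths are the minimizer of $\tfrac12\boldsymbol l^T\boldsymbol l$ subject to $\mathbf C\boldsymbol l=\mathbf g$, namely $\boldsymbol l^*=\mathbf P\bar{\boldsymbol l}$ with $\mathbf P=\mathbf C^T(\mathbf C\mathbf C^T)^{-1}\mathbf C$; set $\mathbf S=\mathbf P-\mathbf I$ and $\Delta\boldsymbol l=\boldsymbol l^*-\bar{\boldsymbol l}=\mathbf S\bar{\boldsymbol l}$. Edge-averaged quantities: let $I$ be uniform on the $M$ springs, independent of everything else; write $\Delta l:=\Delta l_I$, $\bar l:=\bar l_I$. Thus $\mathbb E(\Delta l\mid\bar l=\bar\ell)=\frac1M\sum_{i=1}^M\mathbb E[\Delta l_i\mid \bar l_i=\bar\ell]$, and analogously when additionally conditioning on $\mathbf S$. *)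

theory Defs
  imports "HOL-Probability.Probability" "Jordan_Normal_Form.Gauss_Jordan_Elimination"
begin

text \<open>Nodes are 0,...,N-1 (paper: 1,...,N). A network is a list of springs; spring e is the
  pair (a,b) with a < b, oriented from a to b. The list order is the spring indexing.\<close>

definition cyc_edge :: "nat \<Rightarrow> nat \<Rightarrow> nat \<times> nat" where
  "cyc_edge N k = (min k (Suc k mod N), max k (Suc k mod N))"

definition valid_graph :: "nat \<Rightarrow> nat \<Rightarrow> (nat \<times> nat) list \<Rightarrow> bool" where
  "valid_graph N M E \<longleftrightarrow> distinct E \<and> length E = M \<and>
     (\<forall>(a,b)\<in>set E. a < b \<and> b < N) \<and> (\<forall>k<N. cyc_edge N k \<in> set E)"

definition incidence :: "(nat \<times> nat) list \<Rightarrow> nat \<Rightarrow> nat \<Rightarrow> int" where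
  "incidence E v e = (if v = snd (E!e) then 1 else if v = fst (E!e) then -1 else 0)"

definition connected_by :: "nat \<Rightarrow> (nat \<times> nat) list \<Rightarrow> nat set \<Rightarrow> bool" where
  "connected_by N E T \<longleftrightarrow>
     (\<forall>u<N. \<forall>v<N. (\<lambda>a b. \<exists>e\<in>T. E!e = (a,b) \<or> E!e = (b,a))\<^sup>*\<^sup>* u v)"

definition spanning_tree :: "nat \<Rightarrow> (nat \<times> nat) list \<Rightarrow> nat set \<Rightarrow> bool" where
  "spanning_tree N E T \<longleftrightarrow> T \<subseteq> {..<length E} \<and> card T = N - 1 \<and> connected_by N E T"

text \<open>Signed cycle matrix: choose a spanning tree T; row j is the fundamental cycle closed by
  the non-tree edge f j, with entries +1/-1 according to agreement with an (arbitrary)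
  traversal orientation. Agreement of orientations along a closed traversal is expressed by
  flow conservation at every node.\<close>
definition signed_cycle_matrix :: "nat \<Rightarrow> (nat \<times> nat) list \<Rightarrow> int mat \<Rightarrow> bool" where
  "signed_cycle_matrix N E C \<longleftrightarrow>
    (let M = length E; m = M - N + 1 in
     C \<in> carrier_mat m M \<and>
     (\<exists>T f. spanning_tree N E T \<and> bij_betw f {..<m} ({..<M} - T) \<and>
        (\<forall>j<m. (C $$ (j, f j) = 1 \<or> C $$ (j, f j) = -1) \<and>
               (\<forall>e<M. e \<notin> T \<and> e \<noteq> f j \<longrightarrow> C $$ (j, e) = 0) \<and>
               (\<forall>e<M. C $$ (j, e) \<in> {-1, 0, 1}) \<and>
               (\<forall>v<N. (\<Sum>e<M. incidence E v e * C $$ (j, e)) = 0))))"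

definition proj_mat :: "int mat \<Rightarrow> real mat" where
  "proj_mat C = (let Cr = map_mat real_of_int C in
     transpose_mat Cr * the (mat_inverse (Cr * transpose_mat Cr)) * Cr)"

definition S_mat :: "int mat \<Rightarrow> real mat" where
  "S_mat C = proj_mat C - 1\<^sub>m (dim_col C)"

definition mat_trace :: "real mat \<Rightarrow> real" where
  "mat_trace A = (\<Sum>i<dim_row A. A $$ (i, i))"

definition signed_len :: "real \<Rightarrow> real" where
  "signed_len t = t - of_int \<lfloor>t + 1/2\<rfloor>"

definition lbar :: "(nat \<times> nat) list \<Rightarrow> (nat \<Rightarrow> real) \<Rightarrow> nat \<Rightarrow> real" where
  "lbar E x e = signed_len (x (snd (E!e)) - x (fst (E!e)))"

definition dl :: "(nat \<times> nat) list \<Rightarrow> int mat \<Rightarrow> (nat \<Rightarrow> real) \<Rightarrow> nat \<Rightarrow> real" where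
  "dl E C x i = (\<Sum>j<length E. S_mat C $$ (i, j) * lbar E x j)"

text \<open>Positions: i.i.d. uniform on the circle R/Z, represented in [0,1).\<close>
definition positions :: "nat \<Rightarrow> (nat \<Rightarrow> real) measure" where
  "positions N = PiM {..<N} (\<lambda>_. uniform_measure lborel {0..<1})"

text \<open>Outcome ((E, i), x): graph E drawn from Q (independent of positions), uniformly random
  spring index i, positions x.\<close>
definition ens :: "nat \<Rightarrow> nat \<Rightarrow> (nat \<times> nat) list pmf
    \<Rightarrow> (((nat \<times> nat) list \<times> nat) \<times> (nat \<Rightarrow> real)) measure" where
  "ens N M Q = measure_pmf (pair_pmf Q (pmf_of_set {..<M})) \<Otimes>\<^sub>M positions N"

definition Lbar :: "((nat \<times> nat) list \<times> nat) \<times> (nat \<Rightarrow> real) \<Rightarrow> real" where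
  "Lbar \<omega> = lbar (fst (fst \<omega>)) (snd \<omega>) (snd (fst \<omega>))"

definition DL :: "((nat \<times> nat) list \<Rightarrow> int mat)
    \<Rightarrow> ((nat \<times> nat) list \<times> nat) \<times> (nat \<Rightarrow> real) \<Rightarrow> real" where
  "DL Cof \<omega> = dl (fst (fst \<omega>)) (Cof (fst (fst \<omega>))) (snd \<omega>) (snd (fst \<omega>))"

definition cond_exp_given :: "'a measure \<Rightarrow> ('a \<Rightarrow> real) \<Rightarrow> ('a \<Rightarrow> real) \<Rightarrow> 'a \<Rightarrow> real" where
  "cond_exp_given M X Y = real_cond_exp M (vimage_algebra (space M) Y borel) X"

end

theory Submission
  imports Defs "Jordan_Normal_Form.Determinant"
begin


lemma tr_comm:
  fixes A B :: "'a::comm_ring_1 mat"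
  assumes A: "A \<in> carrier_mat n k" and B: "B \<in> carrier_mat k n"
  shows "(\<Sum>i<n. (A*B)$$(i,i)) = (\<Sum>j<k. (B*A)$$(j,j))"
proof -
  have "(\<Sum>i<n. (A*B)$$(i,i)) = (\<Sum>i<n. \<Sum>j<k. A$$(i,j) * B$$(j,i))"
    using A B by (intro sum.cong refl) (auto simp: scalar_prod_def lessThan_atLeast0)
  also have "\<dots> = (\<Sum>j<k. \<Sum>i<n. B$$(j,i) * A$$(i,j))"
    by (subst sum.swap) (simp add: mult.commute)
  also have "\<dots> = (\<Sum>j<k. (B*A)$$(j,j))"
    using A B by (intro sum.cong refl) (auto simp: scalar_prod_def lessThan_atLeast0)
  finally show ?thesis .
qed

lemma gram_invertible:
  fixes C :: "int mat"
  assumes C: "C \<in> carrier_mat m M"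
    and f: "\<And>j. j < m \<Longrightarrow> f j < M"
    and diag: "\<And>j. j < m \<Longrightarrow> C $$ (j, f j) \<noteq> 0"
    and off: "\<And>j k. j < m \<Longrightarrow> k < m \<Longrightarrow> k \<noteq> j \<Longrightarrow> C $$ (k, f j) = 0"
  defines "Cr \<equiv> map_mat real_of_int C"
  shows "Determinant.det (Cr * transpose_mat Cr) \<noteq> 0"
proof
  let ?G = "Cr * transpose_mat Cr"
  have Cr: "Cr \<in> carrier_mat m M" using C by (simp add: Cr_def)
  have G: "?G \<in> carrier_mat m m" using Cr by auto
  assume "Determinant.det ?G = 0"
  then obtain v where v: "v \<in> carrier_vec m" "v \<noteq> 0\<^sub>v m" "?G *\<^sub>v v = 0\<^sub>v m"
    using det_0_iff_vec_prod_zero[OF G] by auto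
  define w where "w e = (\<Sum>k<m. Cr $$ (k,e) * vec_index v k)" for e
  have Gkl: "?G $$ (k,l) = (\<Sum>e<M. Cr$$(k,e) * Cr$$(l,e))" if "k < m" "l < m" for k l
    using that Cr by (auto simp: scalar_prod_def lessThan_atLeast0 intro!: sum.cong)
  have Gv: "vec_index (?G *\<^sub>v v) k = (\<Sum>l<m. (\<Sum>e<M. Cr$$(k,e) * Cr$$(l,e)) * vec_index v l)" if "k < m" for k
  proof -
    have "vec_index (?G *\<^sub>v v) k = (\<Sum>l<m. ?G $$ (k,l) * vec_index v l)"
      using that Cr v(1) by (auto simp del: index_mult_mat assoc_mult_mat_vec simp add: index_mult_mat(2,3) Gkl scalar_prod_def lessThan_atLeast0 intro!: sum.cong)
    also have "\<dots> = (\<Sum>l<m. (\<Sum>e<M. Cr$$(k,e) * Cr$$(l,e)) * vec_index v l)"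
      using that by (intro sum.cong refl) (simp add: Gkl)
    finally show ?thesis .
  qed
  have "0 = (\<Sum>k<m. vec_index v k * vec_index (?G *\<^sub>v v) k)" using v(3) by simp
  also have "\<dots> = (\<Sum>k<m. vec_index v k * (\<Sum>l<m. (\<Sum>e<M. Cr$$(k,e) * Cr$$(l,e)) * vec_index v l))"
    by (intro sum.cong refl) (simp add: Gv)
  also have "\<dots> = (\<Sum>k<m. \<Sum>l<m. \<Sum>e<M. vec_index v k * Cr$$(k,e) * (Cr$$(l,e) * vec_index v l))"
    by (simp add: sum_distrib_left sum_distrib_right mult.assoc)
  also have "\<dots> = (\<Sum>k<m. \<Sum>e<M. \<Sum>l<m. vec_index v k * Cr$$(k,e) * (Cr$$(l,e) * vec_index v l))"
    by (intro sum.cong refl sum.swap)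
  also have "\<dots> = (\<Sum>e<M. \<Sum>k<m. \<Sum>l<m. vec_index v k * Cr$$(k,e) * (Cr$$(l,e) * vec_index v l))"
    by (rule sum.swap)
  also have "\<dots> = (\<Sum>e<M. w e * w e)"
    unfolding w_def sum_product by (intro sum.cong refl) (simp add: mult.commute)
  finally have "(\<Sum>e<M. w e * w e) = 0" by simp
  hence w0: "\<And>e. e < M \<Longrightarrow> w e = 0"
    by (subst (asm) sum_nonneg_eq_0_iff) auto
  have "v = 0\<^sub>v m"
  proof (rule eq_vecI)
    fix j assume j: "j < dim_vec (0\<^sub>v m)"
    hence jm: "j < m" by simp
    have "w (f j) = (\<Sum>k\<in>{j}. Cr $$ (k, f j) * vec_index v k)"
      unfolding w_def using jm off f Cr
      by (intro sum.mono_neutral_right) (auto simp: Cr_def)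
    hence "Cr $$ (j, f j) * vec_index v j = 0" using w0[OF f[OF jm]] by simp
    moreover have "Cr $$ (j, f j) \<noteq> 0" using diag[OF jm] f[OF jm] jm C by (simp add: Cr_def)
    ultimately show "vec_index v j = vec_index (0\<^sub>v m) j" using jm by simp
  qed (use v in auto)
  with v(2) show False by simp
qed

lemma trace_S:
  assumes sc: "signed_cycle_matrix N E C"
  shows "mat_trace (S_mat C) = real (length E - N + 1) - real (length E)"
proof -
  define M where "M = length E"
  define m where "m = M - N + 1"
  from sc obtain T f where C: "C \<in> carrier_mat m M" and bij: "bij_betw f {..<m} ({..<M} - T)"
    and d: "\<And>j. j < m \<Longrightarrow> C $$ (j, f j) = 1 \<or> C $$ (j, f j) = -1"
    and z: "\<And>j e. j < m \<Longrightarrow> e < M \<Longrightarrow> e \<notin> T \<Longrightarrow> e \<noteq> f j \<Longrightarrow> C $$ (j, e) = 0"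
    unfolding signed_cycle_matrix_def Let_def M_def[symmetric] m_def[symmetric] by blast
  have fM: "f j < M" "f j \<notin> T" if "j < m" for j using bij that unfolding bij_betw_def by auto
  have off: "C $$ (k, f j) = 0" if "j < m" "k < m" "k \<noteq> j" for j k
  proof -
    have "f j \<noteq> f k" using bij that unfolding bij_betw_def inj_on_def by auto
    thus ?thesis using z[OF that(2) fM(1)[OF that(1)] fM(2)[OF that(1)]] by simp
  qed
  have diag: "C $$ (j, f j) \<noteq> 0" if "j < m" for j using d[OF that] by auto
  define Cr where "Cr = map_mat real_of_int C"
  have Cr: "Cr \<in> carrier_mat m M" using C by (simp add: Cr_def)
  define G where "G = Cr * transpose_mat Cr"
  have G: "G \<in> carrier_mat m m" using Cr by (simp add: G_def)
  have dG: "Determinant.det G \<noteq> 0"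
    unfolding G_def Cr_def by (rule gram_invertible[OF C fM(1) diag off])
  have "mat_inverse G \<noteq> None"
  proof
    assume "mat_inverse G = None"
    from notE[OF mat_inverse(1)[OF G this] det_non_zero_imp_unit[OF G dG]] show False .
  qed
  then obtain Gi where Gi: "mat_inverse G = Some Gi" by auto
  from mat_inverse(2)[OF G Gi] have GGi: "G * Gi = 1\<^sub>m m" and Gic: "Gi \<in> carrier_mat m m" by auto
  have pm: "proj_mat C = transpose_mat Cr * Gi * Cr"
    unfolding proj_mat_def Let_def Cr_def[symmetric] G_def[symmetric] Gi by simp
  have A: "transpose_mat Cr * Gi \<in> carrier_mat M m" using Cr Gic by auto
  have dimC: "dim_col C = M" using C by simp
  have "mat_trace (S_mat C) = (\<Sum>i<M. proj_mat C $$ (i,i) - 1)"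
    unfolding mat_trace_def S_mat_def dimC
    by (intro sum.cong) (auto simp: pm)
  also have "\<dots> = (\<Sum>i<M. proj_mat C $$ (i,i)) - real M" by (simp add: sum_subtractf)
  also have "(\<Sum>i<M. proj_mat C $$ (i,i)) = (\<Sum>j<m. (Cr * (transpose_mat Cr * Gi)) $$ (j,j))"
    unfolding pm by (rule tr_comm[OF A Cr])
  also have "Cr * (transpose_mat Cr * Gi) = G * Gi"
    unfolding G_def using Cr Gic by (subst assoc_mult_mat[of _ m M _ m _ m]) auto
  also have "(\<Sum>j<m. (G * Gi) $$ (j,j)) = real m" unfolding GGi by simp
  finally show ?thesis unfolding M_def m_def by simp
qed



definition U :: "real measure" where "U = uniform_measure lborel {0..<1}"

lemma U_density: "U = density lborel (\<lambda>x. ennreal (indicator {0..<1} x))"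
  unfolding U_def uniform_measure_def
  by (intro arg_cong[where f="density lborel"]) (auto simp: fun_eq_iff indicator_def)

lemma prob_U: "prob_space U"
  unfolding U_def by (rule prob_space_uniform_measure) auto

lemma sets_U[simp, measurable_cong]: "sets U = sets borel"
  by (simp add: U_density)

lemma space_U[simp]: "space U = UNIV"
  by (simp add: U_density)

lemma integral_U:
  fixes f :: "real \<Rightarrow> real"
  assumes "f \<in> borel_measurable borel"
  shows "integral\<^sup>L U f = (\<integral>x. indicator {0..<1} x * f x \<partial>lborel)"
  unfolding U_density using assms integral_density[of f lborel "indicator {0..<1}"]
  by simp

lemma sl_int: "signed_len (t + of_int n) = signed_len t"
proof -
  have "t + of_int n + 1/2 = (t + 1/2) + of_int n" by simp
  hence "\<lfloor>t + of_int n + 1/2\<rfloor> = \<lfloor>t + 1/2\<rfloor> + n" by (simp only: floor_add_int)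
  thus ?thesis unfolding signed_len_def by simp
qed

lemma sl_bounds: "-1/2 \<le> signed_len t" "signed_len t < 1/2"
  unfolding signed_len_def
  using of_int_floor_le[of "t + 1/2"] real_of_int_floor_add_one_gt[of "t + 1/2"] by linarith+

lemma sl_abs: "\<bar>signed_len t\<bar> \<le> 1/2"
  using sl_bounds[of t] by linarith

lemma sl_meas[measurable]: "signed_len \<in> borel_measurable borel"
  unfolding signed_len_def[abs_def] by measurable

lemma int_ind:
  fixes h :: "real \<Rightarrow> real"
  assumes "h \<in> borel_measurable borel" "\<And>x. \<bar>h x\<bar> \<le> K"
  shows "integrable lborel (\<lambda>x. indicator {a..<b} x * h x)"
proof (cases "a \<le> b")
  case True
  show ?thesis
    by (rule integrableI_bounded_set[where A="{a..<b}" and B=K]) (use assms True in \<open>auto simp: indicator_def\<close>)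
next
  case False
  hence "{a..<b} = {}" by auto
  thus ?thesis by simp
qed

lemma shift_lborel:
  fixes H :: "real \<Rightarrow> real"
  assumes Hm[measurable]: "H \<in> borel_measurable borel" and Hb: "\<And>t. \<bar>H t\<bar> \<le> K"
    and Hp: "\<And>t n. H (t + of_int n) = H t"
  shows "(\<integral>x. indicator {0..<1} x * H (x - c) \<partial>lborel) = (\<integral>x. indicator {0..<1} x * H x \<partial>lborel)"
proof -
  define d where "d = c - of_int \<lfloor>c\<rfloor>"
  have d: "0 \<le> d" "d < 1" unfolding d_def
    using of_int_floor_le[of c] real_of_int_floor_add_one_gt[of c] by linarith+
  have Hc: "H (x - c) = H (x - d)" for x
    using Hp[of "x - d" "- \<lfloor>c\<rfloor>"] by (simp add: d_def algebra_simps)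
  have H1: "H (x - d) = H (x - d + 1)" for x
    using Hp[of "x - d" 1] by simp
  have m1: "(\<lambda>x. H (x - d)) \<in> borel_measurable borel" "(\<lambda>x. H (x - d + 1)) \<in> borel_measurable borel" by measurable
  have i1: "integrable lborel (\<lambda>x. indicator {0..<d} x * H (x - d + 1))"
    by (rule int_ind[OF m1(2)]) (use Hb in auto)
  have i2: "integrable lborel (\<lambda>x. indicator {d..<1} x * H (x - d))"
    by (rule int_ind[OF m1(1)]) (use Hb in auto)
  have "(\<integral>x. indicator {0..<1} x * H (x - c) \<partial>lborel)
      = (\<integral>x. indicator {0..<d} x * H (x - d + 1) + indicator {d..<1} x * H (x - d) \<partial>lborel)"
    by (rule Bochner_Integration.integral_cong[OF refl]) (use d in \<open>auto simp: indicator_def Hc H1[symmetric]\<close>)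
  also have "\<dots> = (\<integral>x. indicator {0..<d} x * H (x - d + 1) \<partial>lborel) + (\<integral>x. indicator {d..<1} x * H (x - d) \<partial>lborel)"
    by (rule Bochner_Integration.integral_add[OF i1 i2])
  also have "(\<integral>x. indicator {0..<d} x * H (x - d + 1) \<partial>lborel) = (\<integral>x. indicator {1-d..<1} x * H x \<partial>lborel)"
    using lborel_integral_real_affine[of 1 "\<lambda>x. indicator {0..<d} x * H (x - d + 1)" "d - 1"]
    by (simp add: indicator_def algebra_simps)
  also have "(\<integral>x. indicator {d..<1} x * H (x - d) \<partial>lborel) = (\<integral>x. indicator {0..<1-d} x * H x \<partial>lborel)"
    using lborel_integral_real_affine[of 1 "\<lambda>x. indicator {d..<1} x * H (x - d)" "d"]
    by (simp add: indicator_def algebra_simps)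
  also have "(\<integral>x. indicator {1-d..<1} x * H x \<partial>lborel) + (\<integral>x. indicator {0..<1-d} x * H x \<partial>lborel)
      = (\<integral>x. indicator {1-d..<1} x * H x + indicator {0..<1-d} x * H x \<partial>lborel)"
    by (rule Bochner_Integration.integral_add[symmetric]) (rule int_ind[OF Hm], use Hb in auto)+
  also have "\<dots> = (\<integral>x. indicator {0..<1} x * H x \<partial>lborel)"
    by (rule Bochner_Integration.integral_cong[OF refl]) (use d in \<open>auto simp: indicator_def\<close>)
  finally show ?thesis .
qed

lemma shift_U:
  fixes k :: "real \<Rightarrow> real"
  assumes km[measurable]: "k \<in> borel_measurable borel" and kb: "\<And>t. \<bar>k t\<bar> \<le> K"
  shows "(\<integral>y. k (signed_len (y - c)) \<partial>U) = (\<integral>y. k (signed_len y) \<partial>U)"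
proof -
  have "(\<integral>y. k (signed_len (y - c)) \<partial>U) = (\<integral>x. indicator {0..<1} x * k (signed_len (x - c)) \<partial>lborel)"
    by (rule integral_U) measurable
  also have "\<dots> = (\<integral>x. indicator {0..<1} x * k (signed_len x) \<partial>lborel)"
    by (rule shift_lborel[where H="\<lambda>x. k (signed_len x)" and K=K]) (use kb sl_int in auto)
  also have "\<dots> = (\<integral>y. k (signed_len y) \<partial>U)"
    by (rule integral_U[symmetric]) measurable
  finally show ?thesis .
qed



lemma clip_sl: "max (-1) (min 1 (signed_len t)) = signed_len t"
  using sl_bounds[of t] by simp

lemma shift_U_sl: "(\<integral>y. signed_len (y - c) \<partial>U) = (\<integral>y. signed_len y \<partial>U)"
proof -
  have "(\<integral>y. max (-1) (min 1 (signed_len (y - c))) \<partial>U) = (\<integral>y. max (-1) (min 1 (signed_len y)) \<partial>U)"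
    by (rule shift_U[where K=1]) auto
  thus ?thesis by (simp only: clip_sl)
qed

lemma sl_mean0: "(\<integral>y. signed_len y \<partial>U) = 0"
proof -
  have "(\<integral>y. signed_len y \<partial>U) = (\<integral>y. signed_len (y - 1/2) \<partial>U)"
    by (rule shift_U_sl[symmetric])
  also have "\<dots> = (\<integral>x. indicator {0..<1} x * signed_len (x - 1/2) \<partial>lborel)"
    by (rule integral_U) measurable
  also have "\<dots> = (\<integral>x. indicator {0..1} x *\<^sub>R (x - 1/2) \<partial>lborel)"
  proof (rule integral_cong_AE)
    show "AE x in lborel. indicator {0..<1} x * signed_len (x - 1/2) = indicator {0..1} x *\<^sub>R (x - 1/2)"
      using AE_lborel_singleton[of "1::real"]
    proof eventually_elim
      case (elim x)
      show ?case
      proof (cases "x \<in> {0..<1}")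
        case True
        hence "\<lfloor>x - 1/2 + 1/2\<rfloor> = 0" by (simp add: floor_eq_iff)
        thus ?thesis using True by (simp add: signed_len_def indicator_def)
      qed (use elim in \<open>auto simp: indicator_def\<close>)
    qed
  qed measurable
  also have "\<dots> = (\<lambda>x::real. x^2/2 - x/2) 1 - (\<lambda>x::real. x^2/2 - x/2) 0"
    by (rule integral_FTC_atLeastAtMost)
       (auto intro!: derivative_eq_intros continuous_intros simp: has_real_derivative_iff_has_vector_derivative[symmetric] power2_eq_square)
  finally show ?thesis by simp
qed

lemma sl_neg_mean0: "(\<integral>y. signed_len (- y) \<partial>U) = 0"
proof -
  have "(\<integral>y. signed_len (- y) \<partial>U) = (\<integral>x. indicator {0..<1} x * signed_len (- x) \<partial>lborel)"
    by (rule integral_U) measurable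
  also have "\<dots> = (\<integral>x. - (indicator {0..<1} x * signed_len x) \<partial>lborel)"
  proof (rule integral_cong_AE)
    show "AE x in lborel. indicator {0..<1} x * signed_len (- x) = - (indicator {0..<1} x * signed_len x)"
      using AE_lborel_singleton[of "1/2::real"]
    proof eventually_elim
      case (elim x)
      show ?case
      proof (cases "x \<in> {0..<1}")
        case True
        show ?thesis
        proof (cases "x < 1/2")
          case True': True
          hence "\<lfloor>x + 1/2\<rfloor> = 0" "\<lfloor>- x + 1/2\<rfloor> = 0" using True by (auto simp: floor_eq_iff)
          thus ?thesis using True by (simp add: signed_len_def indicator_def)
        next
          case False
          hence "\<lfloor>x + 1/2\<rfloor> = 1" "\<lfloor>- x + 1/2\<rfloor> = -1" using True elim by (auto simp: floor_eq_iff)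
          thus ?thesis using True by (simp add: signed_len_def indicator_def)
        qed
      qed (auto simp: indicator_def)
    qed
  qed measurable
  also have "\<dots> = - (\<integral>x. indicator {0..<1} x * signed_len x \<partial>lborel)" by simp
  also have "(\<integral>x. indicator {0..<1} x * signed_len x \<partial>lborel) = (\<integral>y. signed_len y \<partial>U)"
    by (rule integral_U[symmetric]) measurable
  finally show ?thesis using sl_mean0 by simp
qed

lemma sl_sl_neg: "signed_len (- signed_len s) = signed_len (- s)"
  unfolding signed_len_def[of s]
  using sl_int[of "- s" "\<lfloor>s + 1/2\<rfloor>"] by simp



lemma positions_U: "positions N = PiM {..<N} (\<lambda>_. U)"
  unfolding positions_def U_def ..

lemma prob_PiU: "prob_space (PiM I (\<lambda>_. U))"
  by (rule prob_space_PiM) (rule prob_U)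

lemma prob_positions: "prob_space (positions N)"
  unfolding positions_U by (rule prob_PiU)

lemma comp_meas[measurable]: "(\<lambda>x. x j) \<in> borel_measurable (PiM I (\<lambda>_. U))"
proof (cases "j \<in> I")
  case True
  show ?thesis
    by (subst measurable_cong_sets[OF refl sets_U[symmetric]]) (rule measurable_component_singleton[OF True])
next
  case False
  have h: "x j = undefined" if "x \<in> space (PiM I (\<lambda>_. U))" for x
    using that False by (intro PiE_arb[of x I]) (simp add: space_PiM)
  have "(\<lambda>x. x j) \<in> borel_measurable (PiM I (\<lambda>_. U)) \<longleftrightarrow> (\<lambda>x. undefined :: real) \<in> borel_measurable (PiM I (\<lambda>_. U))"
    by (rule Sigma_Algebra.measurable_cong) (rule h)
  thus ?thesis by simp
qed
lemma PU: "product_sigma_finite (\<lambda>_::nat. U)"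
  unfolding product_sigma_finite_def
  using prob_space_imp_sigma_finite[OF prob_U] by simp

lemma fubini_coord:
  fixes F :: "(nat \<Rightarrow> real) \<Rightarrow> real"
  assumes w: "w < N" and F[measurable]: "F \<in> borel_measurable (positions N)"
    and Fb: "\<And>x. \<bar>F x\<bar> \<le> K"
  shows "integral\<^sup>L (positions N) F =
      (\<integral>x. (\<integral>y. F (x(w:=y)) \<partial>U) \<partial>PiM ({..<N} - {w}) (\<lambda>_. U))"
proof -
  have eq: "insert w ({..<N} - {w}) = {..<N}" using w by auto
  interpret P: prob_space "positions N" by (rule prob_positions)
  have "integrable (positions N) F"
    by (rule P.integrable_const_bound[where B=K]) (use Fb in auto)
  hence "integrable (PiM (insert w ({..<N} - {w})) (\<lambda>_. U)) F"
    unfolding eq positions_U[symmetric] .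
  from product_sigma_finite.product_integral_insert[OF PU _ _ this] show ?thesis
    unfolding eq positions_U[symmetric] by simp
qed

definition Gf :: "real set \<Rightarrow> real" where
  "Gf B = (\<integral>y. indicator B (signed_len y) * signed_len y \<partial>U)"

lemma lemB:
  assumes ab: "a < b" "b < N" and B[measurable]: "B \<in> sets borel"
  shows "(\<integral>x. indicator B (signed_len (x b - x a)) * signed_len (x b - x a) \<partial>positions N) = Gf B"
proof -
  have "(\<integral>x. indicator B (signed_len (x b - x a)) * signed_len (x b - x a) \<partial>positions N)
      = (\<integral>x. (\<integral>y. indicator B (signed_len (y - x a)) * signed_len (y - x a) \<partial>U) \<partial>PiM ({..<N} - {b}) (\<lambda>_. U))"
  proof -
    have m: "(\<lambda>x. indicator B (signed_len (x b - x a)) * signed_len (x b - x a)) \<in> borel_measurable (positions N)"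
      unfolding positions_U by measurable
    have bd: "\<bar>indicator B (signed_len (x b - x a)) * signed_len (x b - x a)\<bar> \<le> 1" for x :: "nat \<Rightarrow> real"
      using sl_abs[of "x b - x a"] by (simp add: indicator_def)
    show ?thesis using ab by (simp add: fubini_coord[OF ab(2) m bd])
  qed
  also have "\<dots> = (\<integral>x. Gf B \<partial>PiM ({..<N} - {b}) (\<lambda>_. U))"
  proof (rule Bochner_Integration.integral_cong[OF refl])
    fix x
    have "(\<integral>y. (\<lambda>t. indicator B t * max (-1) (min 1 t)) (signed_len (y - x a)) \<partial>U)
        = (\<integral>y. (\<lambda>t. indicator B t * max (-1) (min 1 t)) (signed_len y) \<partial>U)"
      by (rule shift_U[where K=1]) (auto simp: indicator_def)
    thus "(\<integral>y. indicator B (signed_len (y - x a)) * signed_len (y - x a) \<partial>U) = Gf B"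
      by (simp only: clip_sl Gf_def)
  qed
  also have "\<dots> = Gf B"
    using prob_space.prob_space[OF prob_PiU, of "{..<N} - {b}"] by simp
  finally show ?thesis .
qed

lemma lemA:
  assumes ab: "a < b" "b < N" and cd: "c < d" "d < N" and ne: "(a,b) \<noteq> (c,d)"
    and B[measurable]: "B \<in> sets borel"
  shows "(\<integral>x. indicator B (signed_len (x b - x a)) * signed_len (x d - x c) \<partial>positions N) = 0"
proof (cases "d \<in> {a,b}")
  case False
  have "(\<integral>x. indicator B (signed_len (x b - x a)) * signed_len (x d - x c) \<partial>positions N)
      = (\<integral>x. (\<integral>y. indicator B (signed_len (x b - x a)) * signed_len (y - x c) \<partial>U) \<partial>PiM ({..<N} - {d}) (\<lambda>_. U))"
  proof -
    have m: "(\<lambda>x. indicator B (signed_len (x b - x a)) * signed_len (x d - x c)) \<in> borel_measurable (positions N)"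
      unfolding positions_U by measurable
    have bd: "\<bar>indicator B (signed_len (x b - x a)) * signed_len (x d - x c)\<bar> \<le> 1" for x :: "nat \<Rightarrow> real"
      using sl_abs[of "x d - x c"] by (simp add: indicator_def)
    show ?thesis using ab cd False by (simp add: fubini_coord[OF cd(2) m bd])
  qed
  also have "\<dots> = (\<integral>x. 0 \<partial>PiM ({..<N} - {d}) (\<lambda>_. U))"
    by (rule Bochner_Integration.integral_cong[OF refl]) (simp add: shift_U_sl sl_mean0)
  finally show ?thesis by simp
next
  case True
  have c: "c \<notin> {a,b}" using True ab cd ne by auto
  have "(\<integral>x. indicator B (signed_len (x b - x a)) * signed_len (x d - x c) \<partial>positions N)
      = (\<integral>x. (\<integral>y. indicator B (signed_len (x b - x a)) * signed_len (x d - y) \<partial>U) \<partial>PiM ({..<N} - {c}) (\<lambda>_. U))"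
  proof -
    have m: "(\<lambda>x. indicator B (signed_len (x b - x a)) * signed_len (x d - x c)) \<in> borel_measurable (positions N)"
      unfolding positions_U by measurable
    have bd: "\<bar>indicator B (signed_len (x b - x a)) * signed_len (x d - x c)\<bar> \<le> 1" for x :: "nat \<Rightarrow> real"
      using sl_abs[of "x d - x c"] by (simp add: indicator_def)
    have cN: "c < N" using cd by simp
    show ?thesis using ab cd c by (simp add: fubini_coord[OF cN m bd])
  qed
  also have "\<dots> = (\<integral>x. 0 \<partial>PiM ({..<N} - {c}) (\<lambda>_. U))"
  proof (rule Bochner_Integration.integral_cong[OF refl])
    fix x
    have "(\<integral>y. signed_len (- signed_len (y - x d)) \<partial>U) = (\<integral>y. signed_len (- signed_len y) \<partial>U)"
      by (rule shift_U[where K=1]) (auto intro: order_trans[OF sl_abs])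
    hence "(\<integral>y. signed_len (x d - y) \<partial>U) = 0"
      by (simp add: sl_sl_neg sl_neg_mean0)
    thus "(\<integral>y. indicator B (signed_len (x b - x a)) * signed_len (x d - y) \<partial>U) = 0" by simp
  qed
  finally show ?thesis by simp
qed



lemma pmf_pair_fubini:
  fixes R :: "'e::countable pmf" and P :: "'b measure" and g :: "'e \<Rightarrow> 'b \<Rightarrow> real"
  assumes P: "prob_space P"
    and gm: "\<And>e. g e \<in> borel_measurable P"
    and gb: "\<And>e x. e \<in> set_pmf R \<Longrightarrow> \<bar>g e x\<bar> \<le> K"
  shows "integrable (measure_pmf R \<Otimes>\<^sub>M P) (\<lambda>\<omega>. g (fst \<omega>) (snd \<omega>))"
    and "(\<integral>\<omega>. g (fst \<omega>) (snd \<omega>) \<partial>(measure_pmf R \<Otimes>\<^sub>M P)) = (\<integral>e. (\<integral>x. g e x \<partial>P) \<partial>measure_pmf R)"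
proof -
  interpret P: prob_space P by (rule P)
  interpret RP: pair_sigma_finite "measure_pmf R" P ..
  interpret RPp: prob_space "measure_pmf R \<Otimes>\<^sub>M P"
    by (rule prob_space_pair[OF measure_pmf.prob_space_axioms P])
  have sets_eq: "sets (measure_pmf R \<Otimes>\<^sub>M P) = sets (count_space UNIV \<Otimes>\<^sub>M P)"
    by (rule sets_pair_measure_cong) simp_all
  have m: "(\<lambda>\<omega>. g (fst \<omega>) (snd \<omega>)) \<in> borel_measurable (measure_pmf R \<Otimes>\<^sub>M P)"
    unfolding measurable_cong_sets[OF sets_eq refl]
    by (rule measurable_pair_measure_countable1) (simp_all add: gm)
  have setm: "{\<omega> \<in> space (measure_pmf R \<Otimes>\<^sub>M P). fst \<omega> \<in> set_pmf R} \<in> sets (measure_pmf R \<Otimes>\<^sub>M P)"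
  proof -
    have "(\<lambda>\<omega>. indicator (set_pmf R) (fst \<omega>) :: real) \<in> borel_measurable (measure_pmf R \<Otimes>\<^sub>M P)"
      unfolding measurable_cong_sets[OF sets_eq refl]
      by (rule measurable_pair_measure_countable1) simp_all
    from measurable_sets[OF this, of "{1}"] show ?thesis
      by (simp add: indicator_def Int_def conj_commute)
  qed
  have ae: "AE \<omega> in measure_pmf R \<Otimes>\<^sub>M P. fst \<omega> \<in> set_pmf R"
    by (rule RP.AE_pair_measure[OF setm]) (auto simp: AE_measure_pmf_iff)
  have ae2: "AE \<omega> in measure_pmf R \<Otimes>\<^sub>M P. norm (g (fst \<omega>) (snd \<omega>)) \<le> K"
    using ae by eventually_elim (simp add: gb)
  show int: "integrable (measure_pmf R \<Otimes>\<^sub>M P) (\<lambda>\<omega>. g (fst \<omega>) (snd \<omega>))"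
    by (rule RPp.integrable_const_bound[OF ae2 m])
  have int2: "integrable (measure_pmf R \<Otimes>\<^sub>M P) (case_prod g)"
    using int by (simp add: case_prod_unfold)
  show "(\<integral>\<omega>. g (fst \<omega>) (snd \<omega>) \<partial>(measure_pmf R \<Otimes>\<^sub>M P)) = (\<integral>e. (\<integral>x. g e x \<partial>P) \<partial>measure_pmf R)"
    using RP.integral_fst[OF int2] by (simp add: case_prod_unfold)
qed

lemma valid_edge:
  assumes "valid_graph N M E" "i < M"
  shows "fst (E!i) < snd (E!i)" "snd (E!i) < N"
proof -
  obtain a b where ab: "E!i = (a,b)" by (cases "E!i")
  have "E!i \<in> set E" using assms unfolding valid_graph_def by auto
  hence "a < b \<and> b < N" using assms ab unfolding valid_graph_def by fastforce
  thus "fst (E!i) < snd (E!i)" "snd (E!i) < N" using ab by auto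
qed

lemma valid_edge_ne:
  assumes "valid_graph N M E" "i < M" "j < M" "i \<noteq> j"
  shows "E!i \<noteq> E!j"
  using assms unfolding valid_graph_def by (auto simp: nth_eq_iff_index_eq)

lemma lbar_bd: "\<bar>lbar E x i\<bar> \<le> 1"
  unfolding lbar_def using sl_abs by (rule order_trans) simp

lemma lbar_meas[measurable]: "(\<lambda>x. lbar E x i) \<in> borel_measurable (positions N)"
  unfolding lbar_def positions_U by measurable

lemma inner_same:
  assumes v: "valid_graph N M E" and i: "i < M" and B[measurable]: "B \<in> sets borel"
  shows "(\<integral>x. indicator B (lbar E x i) * lbar E x i \<partial>positions N) = Gf B"
  unfolding lbar_def using lemB[OF valid_edge[OF v i] B] .

lemma inner_other:
  assumes v: "valid_graph N M E" and i: "i < M" and j: "j < M" and ij: "i \<noteq> j"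
    and B[measurable]: "B \<in> sets borel"
  shows "(\<integral>x. indicator B (lbar E x i) * lbar E x j \<partial>positions N) = 0"
proof -
  have ne: "(fst (E!i), snd (E!i)) \<noteq> (fst (E!j), snd (E!j))"
    using valid_edge_ne[OF v i j ij] by (simp add: prod_eq_iff)
  show ?thesis
    unfolding lbar_def using lemA[OF valid_edge[OF v i] valid_edge[OF v j] ne B] .
qed

lemma inner_DL:
  assumes v: "valid_graph N M E" and i: "i < M" and B[measurable]: "B \<in> sets borel"
  shows "(\<integral>x. indicator B (lbar E x i) * dl E C x i \<partial>positions N) = S_mat C $$ (i,i) * Gf B"
proof -
  have len: "length E = M" using v unfolding valid_graph_def by simp
  have int: "integrable (positions N) (\<lambda>x. S_mat C $$ (i,j) * (indicator B (lbar E x i) * lbar E x j))" for j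
  proof -
    interpret P: prob_space "positions N" by (rule prob_positions)
    have "integrable (positions N) (\<lambda>x. indicator B (lbar E x i) * lbar E x j)"
      by (rule P.integrable_const_bound[where B=1]) (auto simp: indicator_def intro: lbar_bd)
    thus ?thesis by (rule integrable_mult_right)
  qed
  have "(\<integral>x. indicator B (lbar E x i) * dl E C x i \<partial>positions N)
      = (\<integral>x. (\<Sum>j<M. S_mat C $$ (i,j) * (indicator B (lbar E x i) * lbar E x j)) \<partial>positions N)"
    unfolding dl_def len by (simp add: sum_distrib_left mult_ac)
  also have "\<dots> = (\<Sum>j<M. S_mat C $$ (i,j) * (\<integral>x. indicator B (lbar E x i) * lbar E x j \<partial>positions N))"
    by (subst Bochner_Integration.integral_sum[OF int]) simp
  also have "\<dots> = (\<Sum>j<M. if j = i then S_mat C $$ (i,i) * Gf B else 0)"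
    by (intro sum.cong refl) (auto simp: inner_same[OF v i B] inner_other[OF v i _ _ B])
  also have "\<dots> = S_mat C $$ (i,i) * Gf B" using i by simp
  finally show ?thesis .
qed



lemma finite_valid: "finite {E. valid_graph N M E}"
proof (rule finite_subset)
  show "{E. valid_graph N M E} \<subseteq> {xs. set xs \<subseteq> {..<N} \<times> {..<N} \<and> length xs = M}"
    unfolding valid_graph_def by fastforce
  show "finite {xs. set xs \<subseteq> {..<N} \<times> {..<N} \<and> length xs = M}"
    by (rule finite_lists_length_eq) simp
qed

lemma dl_meas[measurable]: "(\<lambda>x. dl E C x i) \<in> borel_measurable (positions N)"
  unfolding dl_def by measurable

lemma sum_R:
  fixes Q :: "(nat \<times> nat) list pmf" and h :: "(nat \<times> nat) list \<times> nat \<Rightarrow> real"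
  assumes fin: "finite (set_pmf Q)" and M0: "0 < M"
  shows "(\<integral>e. h e \<partial>measure_pmf (pair_pmf Q (pmf_of_set {..<M})))
      = (\<Sum>E\<in>set_pmf Q. pmf Q E * (\<Sum>i<M. h (E,i)) / real M)"
proof -
  have ne: "{..<M} \<noteq> {}" using M0 by auto
  have "(\<integral>e. h e \<partial>measure_pmf (pair_pmf Q (pmf_of_set {..<M})))
      = (\<Sum>a\<in>set_pmf Q \<times> {..<M}. pmf (pair_pmf Q (pmf_of_set {..<M})) a *\<^sub>R h a)"
    by (rule integral_measure_pmf) (use fin ne in auto)
  also have "\<dots> = (\<Sum>(E,i)\<in>set_pmf Q \<times> {..<M}. pmf Q E * (1 / real M) * h (E,i))"
    by (intro sum.cong refl) (auto simp: pmf_pair pmf_of_set[OF ne finite_lessThan])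
  also have "\<dots> = (\<Sum>E\<in>set_pmf Q. \<Sum>i<M. pmf Q E * (1 / real M) * h (E,i))"
    by (rule sum.cartesian_product[symmetric])
  also have "\<dots> = (\<Sum>E\<in>set_pmf Q. pmf Q E * (\<Sum>i<M. h (E,i)) / real M)"
    by (intro sum.cong refl) (simp add: sum_distrib_left sum_divide_distrib)
  finally show ?thesis .
qed

lemma core:
  fixes N M :: nat and Q :: "(nat \<times> nat) list pmf" and Cof :: "(nat \<times> nat) list \<Rightarrow> int mat"
    and \<kappa> :: real
  assumes M0: "0 < M" and supp: "set_pmf Q \<subseteq> {E. valid_graph N M E}"
    and tr: "\<And>E. E \<in> set_pmf Q \<Longrightarrow> (\<Sum>i<M. S_mat (Cof E) $$ (i,i)) = \<kappa> * real M"
  shows "AE \<omega> in ens N M Q. cond_exp_given (ens N M Q) (DL Cof) Lbar \<omega> = \<kappa> * Lbar \<omega>"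
proof -
  define R where "R = pair_pmf Q (pmf_of_set {..<M})"
  define \<Omega> where "\<Omega> = ens N M Q"
  have \<Omega>: "\<Omega> = measure_pmf R \<Otimes>\<^sub>M positions N" unfolding \<Omega>_def ens_def R_def ..
  have ne: "{..<M} \<noteq> {}" using M0 by auto
  have setR: "set_pmf R = set_pmf Q \<times> {..<M}" using ne by (simp add: R_def)
  have finQ: "finite (set_pmf Q)" by (rule finite_subset[OF supp finite_valid])
  have vQ: "valid_graph N M E" if "E \<in> set_pmf Q" for E using supp that by auto
  have P: "prob_space (positions N)" by (rule prob_positions)
  interpret \<Omega>p: prob_space \<Omega> unfolding \<Omega>
    by (rule prob_space_pair[OF measure_pmf.prob_space_axioms P])
  define K where "K = (\<Sum>E\<in>set_pmf Q. \<Sum>i<M. \<Sum>j<M. \<bar>S_mat (Cof E) $$ (i,j)\<bar>)"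
  have dlb: "\<bar>dl E (Cof E) x i\<bar> \<le> K" if E: "E \<in> set_pmf Q" and i: "i < M" for E x i
  proof -
    have len: "length E = M" using vQ[OF E] unfolding valid_graph_def by simp
    have "\<bar>dl E (Cof E) x i\<bar> \<le> (\<Sum>j<M. \<bar>S_mat (Cof E) $$ (i,j) * lbar E x j\<bar>)"
      unfolding dl_def len by (rule sum_abs)
    also have "\<dots> \<le> (\<Sum>j<M. \<bar>S_mat (Cof E) $$ (i,j)\<bar>)"
      by (intro sum_mono) (auto simp: abs_mult intro: mult_left_le[OF lbar_bd])
    also have "\<dots> \<le> (\<Sum>i<M. \<Sum>j<M. \<bar>S_mat (Cof E) $$ (i,j)\<bar>)"
      by (rule member_le_sum[where f="\<lambda>i. \<Sum>j<M. \<bar>S_mat (Cof E) $$ (i,j)\<bar>"]) (use i in \<open>auto intro: sum_nonneg\<close>)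
    also have "\<dots> \<le> K" unfolding K_def
      by (rule member_le_sum[where f="\<lambda>E. \<Sum>i<M. \<Sum>j<M. \<bar>S_mat (Cof E) $$ (i,j)\<bar>"]) (use E finQ in \<open>auto intro!: sum_nonneg\<close>)
    finally show ?thesis .
  qed
  have K0: "0 \<le> K" unfolding K_def by (intro sum_nonneg) auto
  have intL: "integrable \<Omega> Lbar"
    unfolding \<Omega> Lbar_def
    by (rule pmf_pair_fubini(1)[OF P, where K=1]) (auto intro: lbar_bd)
  have intDL: "integrable \<Omega> (DL Cof)"
    unfolding \<Omega> DL_def
    by (rule pmf_pair_fubini(1)[OF P, where K=K]) (auto simp: setR intro: dlb)
  have Lm: "Lbar \<in> borel_measurable \<Omega>" using intL by auto
  define F where "F = vimage_algebra (space \<Omega>) Lbar borel"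
  have setsF: "sets F = {Lbar -` A \<inter> space \<Omega> | A. A \<in> sets borel}"
    unfolding F_def by (rule sets_vimage_algebra2) simp
  have sub: "subalgebra \<Omega> F"
    unfolding subalgebra_def using measurable_sets[OF Lm] by (auto simp: F_def setsF[unfolded F_def])
  interpret fs: finite_measure_subalgebra \<Omega> F
    by unfold_locales (rule sub)
  have LF: "Lbar \<in> borel_measurable F"
    unfolding F_def by (rule measurable_vimage_algebra1) simp
  have kLF: "(\<lambda>\<omega>. \<kappa> * Lbar \<omega>) \<in> borel_measurable F"
    by (intro borel_measurable_times borel_measurable_const LF)
  have "AE \<omega> in \<Omega>. real_cond_exp \<Omega> F (DL Cof) \<omega> = \<kappa> * Lbar \<omega>"
  proof (rule fs.real_cond_exp_charact)
    fix A assume "A \<in> sets F"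
    then obtain B where B[measurable]: "B \<in> sets borel" and A: "A = Lbar -` B \<inter> space \<Omega>"
      unfolding setsF by auto
    have indA: "indicator A \<omega> = indicator B (Lbar \<omega>)" if "\<omega> \<in> space \<Omega>" for \<omega> :: "((nat \<times> nat) list \<times> nat) \<times> (nat \<Rightarrow> real)"
      using that unfolding A by (simp add: indicator_def)
    have "(\<integral>\<omega>\<in>A. DL Cof \<omega> \<partial>\<Omega>) = (\<integral>\<omega>. indicator B (Lbar \<omega>) * DL Cof \<omega> \<partial>\<Omega>)"
      unfolding set_lebesgue_integral_def
      by (rule Bochner_Integration.integral_cong[OF refl]) (simp add: indA)
    also have "\<dots> = (\<integral>e. (\<integral>x. indicator B (lbar (fst e) x (snd e)) * dl (fst e) (Cof (fst e)) x (snd e) \<partial>positions N) \<partial>measure_pmf R)"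
      unfolding \<Omega> Lbar_def DL_def
      by (rule pmf_pair_fubini(2)[OF P, where K=K])
         (auto simp: setR abs_mult indicator_def K0 intro: dlb)
    also have "\<dots> = (\<Sum>E\<in>set_pmf Q. pmf Q E * (\<Sum>i<M. S_mat (Cof E) $$ (i,i) * Gf B) / real M)"
      unfolding R_def sum_R[OF finQ M0]
      by (intro sum.cong refl) (simp add: inner_DL[OF vQ _ B])
    also have "\<dots> = (\<Sum>E\<in>set_pmf Q. pmf Q E * (\<kappa> * Gf B))"
      using M0 by (intro sum.cong refl) (simp add: sum_distrib_right[symmetric] tr)
    finally have L: "(\<integral>\<omega>\<in>A. DL Cof \<omega> \<partial>\<Omega>) = (\<Sum>E\<in>set_pmf Q. pmf Q E * (\<kappa> * Gf B))" .
    have "(\<integral>\<omega>\<in>A. \<kappa> * Lbar \<omega> \<partial>\<Omega>) = (\<integral>\<omega>. indicator B (Lbar \<omega>) * (\<kappa> * Lbar \<omega>) \<partial>\<Omega>)"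
      unfolding set_lebesgue_integral_def
      by (rule Bochner_Integration.integral_cong[OF refl]) (simp add: indA)
    also have "\<dots> = (\<integral>e. (\<integral>x. indicator B (lbar (fst e) x (snd e)) * (\<kappa> * lbar (fst e) x (snd e)) \<partial>positions N) \<partial>measure_pmf R)"
      unfolding \<Omega> Lbar_def
      by (rule pmf_pair_fubini(2)[OF P, where K="\<bar>\<kappa>\<bar>"])
         (auto simp: abs_mult indicator_def intro: mult_left_le[OF lbar_bd])
    also have "\<dots> = (\<Sum>E\<in>set_pmf Q. pmf Q E * (\<Sum>i<M. \<kappa> * Gf B) / real M)"
    proof -
      have inn: "(\<Sum>i<M. (\<integral>x. indicator B (lbar E x i) * (\<kappa> * lbar E x i) \<partial>positions N)) = (\<Sum>i<M. \<kappa> * Gf B)"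
        if E: "E \<in> set_pmf Q" for E
      proof (rule sum.cong[OF refl])
        fix i assume "i \<in> {..<M}"
        hence i: "i < M" by simp
        have "(\<integral>x. indicator B (lbar E x i) * (\<kappa> * lbar E x i) \<partial>positions N)
            = (\<integral>x. \<kappa> * (indicator B (lbar E x i) * lbar E x i) \<partial>positions N)"
          by (rule Bochner_Integration.integral_cong[OF refl]) simp
        also have "\<dots> = \<kappa> * Gf B" using inner_same[OF vQ[OF E] i B] by simp
        finally show "(\<integral>x. indicator B (lbar E x i) * (\<kappa> * lbar E x i) \<partial>positions N) = \<kappa> * Gf B" .
      qed
      show ?thesis
        unfolding R_def sum_R[OF finQ M0]
        by (intro sum.cong refl) (simp add: inn)
    qed
    also have "\<dots> = (\<Sum>E\<in>set_pmf Q. pmf Q E * (\<kappa> * Gf B))"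
      using M0 by (intro sum.cong refl) simp
    finally show "(\<integral>\<omega>\<in>A. DL Cof \<omega> \<partial>\<Omega>) = (\<integral>\<omega>\<in>A. \<kappa> * Lbar \<omega> \<partial>\<Omega>)" using L by simp
  next
    show "integrable \<Omega> (DL Cof)" by (rule intDL)
    show "integrable \<Omega> (\<lambda>\<omega>. \<kappa> * Lbar \<omega>)" using intL by simp
    show "(\<lambda>\<omega>. \<kappa> * Lbar \<omega>) \<in> borel_measurable F" by (rule kLF)
  qed
  thus ?thesis unfolding cond_exp_given_def \<Omega>_def F_def .
qed


theorem mainTheorem3:
  fixes N M :: nat and z :: real
    and Q :: "(nat \<times> nat) list pmf" and Cof :: "(nat \<times> nat) list \<Rightarrow> int mat"
    and E0 :: "(nat \<times> nat) list" and C0 :: "int mat"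
  assumes "N \<ge> 3" and "2 \<le> z" and "z \<le> real N - 1" and "real M = real N * z / 2"
    and "set_pmf Q \<subseteq> {E. valid_graph N M E}"
    and "\<And>E. valid_graph N M E \<Longrightarrow> signed_cycle_matrix N E (Cof E)"
    and "valid_graph N M E0" and "signed_cycle_matrix N E0 C0"
  shows "(AE \<omega> in ens N M Q.
            cond_exp_given (ens N M Q) (DL Cof) Lbar \<omega>
              = - (2 * Lbar \<omega> / z) * (1 - 1 / real N))
       \<and> (AE \<omega> in ens N M (return_pmf E0).
            cond_exp_given (ens N M (return_pmf E0)) (DL (\<lambda>_. C0)) Lbar \<omega>
              = 2 * Lbar \<omega> / (real N * z) * mat_trace (S_mat C0))"
proof -
  note A = assms
  have Npos: "real N > 0" using A(1) by simp
  have zpos: "z > 0" using A(2) by simp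
  have "real N * 2 \<le> real N * z" using A(2) by (intro mult_left_mono) auto
  hence "real M \<ge> real N" using A(4) by linarith
  hence MN: "N \<le> M" by simp
  have M0: "0 < M" using MN A(1) by simp
  have trM: "(\<Sum>i<M. S_mat C $$ (i,i)) = mat_trace (S_mat C)"
    if v: "valid_graph N M E" and sc: "signed_cycle_matrix N E C" for E C
  proof -
    have "C \<in> carrier_mat (length E - N + 1) (length E)"
      using sc unfolding signed_cycle_matrix_def Let_def by blast
    hence "dim_row (S_mat C) = M" using v unfolding S_mat_def valid_graph_def by simp
    thus ?thesis unfolding mat_trace_def by simp
  qed
  have len: "length E = M" if "valid_graph N M E" for E using that unfolding valid_graph_def by simp
  have P1: "AE \<omega> in ens N M Q. cond_exp_given (ens N M Q) (DL Cof) Lbar \<omega> = ((1 - real N) / real M) * Lbar \<omega>"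
  proof (rule core[OF M0 A(5)])
    fix E assume "E \<in> set_pmf Q"
    hence v: "valid_graph N M E" using A(5) by auto
    have sc: "signed_cycle_matrix N E (Cof E)" by (rule A(6)[OF v])
    have "(\<Sum>i<M. S_mat (Cof E) $$ (i,i)) = real (M - N + 1) - real M"
      using trM[OF v sc] trace_S[OF sc] len[OF v] by simp
    also have "\<dots> = 1 - real N" using MN by (simp add: of_nat_diff)
    also have "\<dots> = (1 - real N) / real M * real M" using M0 by simp
    finally show "(\<Sum>i<M. S_mat (Cof E) $$ (i,i)) = (1 - real N) / real M * real M" .
  qed
  have P2: "AE \<omega> in ens N M (return_pmf E0). cond_exp_given (ens N M (return_pmf E0)) (DL (\<lambda>_. C0)) Lbar \<omega>
      = (mat_trace (S_mat C0) / real M) * Lbar \<omega>"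
  proof (rule core[OF M0])
    show "set_pmf (return_pmf E0) \<subseteq> {E. valid_graph N M E}" using A(7) by simp
    fix E assume "E \<in> set_pmf (return_pmf E0)"
    show "(\<Sum>i<M. S_mat ((\<lambda>_. C0) E) $$ (i,i)) = mat_trace (S_mat C0) / real M * real M"
      using trM[OF A(7) A(8)] M0 by simp
  qed
  have e1: "(1 - real N) / real M * L = - (2 * L / z) * (1 - 1 / real N)" for L
    unfolding A(4) using Npos zpos by (simp add: field_simps)
  have e2: "mat_trace (S_mat C0) / real M * L = 2 * L / (real N * z) * mat_trace (S_mat C0)" for L
    unfolding A(4) using Npos zpos by (simp add: field_simps)
  show ?thesis using P1 P2 unfolding e1 e2 by blast
qed

end
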